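(* Let $M\ge 1$ and $K\ge 1$ be integers and $\rho>0$. Let $\mathbf{h}_1,\ldots,\mathbf{h}_K$ be i.i.d. random vectors with $\mathbf{h}_k\sim\mathcal{CN}(\mathbf{0},\mathbf{I}_M)$, so that each $X_k=\|\mathbf{h}_k\|^2$ has CDF $F_X(x)=1-\Gamma(M,x)/\Gamma(M)$ for $x\ge0$. Let $\gamma=\rho\min_{1\le k\le K}X_k$, $g(\gamma)=1+\gamma$, and $\mathcal{M}_{g(\gamma)}(s)=\mathbb{E}\left[g(\gamma)^{s-1}\right]$. For $\beta>0$ and $s<1$ define $$\mathcal{B}(s,\beta)=\sum_{k=0}^{K}\sum_{j=0}^{kM}\binom{K}{k}\binom{kM}{j}(-1)^{k+j}e^{\frac{j\beta}{\rho}}\left(\frac{j\beta}{\rho}\right)^{1-s}\Gamma\!\left(s-1,\frac{j\beta}{\rho}\right),$$ where for $j=0$ the factor $e^{c}c^{1-s}\Gamma(s-1,c)$ (with $c=j\beta/\rho$) is understood as its limit $1/(1-s)$ as $c\to0^+$. Let $b=[\Gamma(1+M)]^{-1/M}$. Then for every $s<1$, $$1+(s-1)\mathcal{B}(s,b)\ \le\ \mathcal{M}_{g(\gamma)}(s)\ \le\ 1+(s-1)\mathcal{B}(s,1).$$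
   Context: $\Gamma(a,x)=\int_x^\infty t^{a-1}e^{-t}\,\mathrm{d}t$ is the upper incomplete gamma function (defined for all real $a$ when $x>0$), and $\Gamma(a)=\Gamma(a,0)$ for $a>0$. The notation $\mathcal{CN}(\mathbf{0},\mathbf{I}_M)$ denotes a circularly symmetric complex Gaussian vector in $\mathbb{C}^M$ with identity covariance. *)

theory Defs
  imports "HOL-Probability.Probability"
begin

definition upper_inc_gamma :: "real \<Rightarrow> real \<Rightarrow> real" where
  "upper_inc_gamma a x = (LINT t:{x..}|lborel. t powr (a - 1) * exp (- t))"

definition inc_gamma_factor :: "real \<Rightarrow> real \<Rightarrow> real" where
  "inc_gamma_factor s c =
     (if c = 0 then 1 / (1 - s) else exp c * c powr (1 - s) * upper_inc_gamma (s - 1) c)"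

definition Bfun :: "nat \<Rightarrow> nat \<Rightarrow> real \<Rightarrow> real \<Rightarrow> real \<Rightarrow> real" where
  "Bfun M K \<rho> s \<beta> =
     (\<Sum>k = 0..K. \<Sum>j = 0..k * M.
        real (K choose k) * real ((k * M) choose j) * (-1) ^ (k + j)
        * inc_gamma_factor s (real j * \<beta> / \<rho>))"

end

theory Submission
  imports Defs
begin

definition Qs :: "nat \<Rightarrow> real \<Rightarrow> real" where
  "Qs k x = exp (- x) * (\<Sum>n\<le>k. x ^ n / fact n)"

lemma gamma_tail:
  assumes x: "0 \<le> x"
  shows "upper_inc_gamma (real (Suc k)) x = fact k * Qs k x"
proof -
  let ?f = "\<lambda>t::real. t ^ k * exp (- t)"
  have Icc: "(\<integral>\<^sup>+t. ennreal (?f t) * indicator {0 .. x} t \<partial>lborel) =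
    (1 - (\<Sum>n\<le>k. (x^n * exp (-x)) / fact n)) * fact k"
    by (rule nn_intergal_power_times_exp_Icc[OF x])
  have Ici: "(\<integral>\<^sup>+t. ennreal (?f t) * indicator {0 ..} t \<partial>lborel) = real_of_nat (fact k)"
    by (rule nn_intergal_power_times_exp_Ici)
  have split: "(\<integral>\<^sup>+t. ennreal (?f t) * indicator {0 ..} t \<partial>lborel) =
     (\<integral>\<^sup>+t. ennreal (?f t) * indicator {0 .. x} t \<partial>lborel) +
     (\<integral>\<^sup>+t. ennreal (?f t) * indicator {x<..} t \<partial>lborel)"
    using x by (subst nn_integral_add[symmetric]) (auto intro!: nn_integral_cong split: split_indicator)
  have nn: "\<And>t. 0 \<le> indicator {x<..} t * ?f t"
    using x by (auto split: split_indicator)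
  have eqnn: "(\<integral>\<^sup>+t. ennreal (?f t) * indicator {x<..} t \<partial>lborel) = (\<integral>\<^sup>+t. ennreal (indicator {x<..} t * ?f t) \<partial>lborel)"
    by (intro nn_integral_cong) (auto split: split_indicator)
  define I where "I = (\<integral>\<^sup>+t. ennreal (indicator {x<..} t * ?f t) \<partial>lborel)"
  have sumle: "(\<Sum>n\<le>k. (x^n * exp (-x)) / fact n) \<le> 1"
    using erlang_CDF_nonneg[of 1 k x] x by (simp add: erlang_CDF_def)
  have "I \<le> (\<integral>\<^sup>+t. ennreal (?f t) * indicator {0 .. x} t \<partial>lborel) + I"
    by (rule add_increasing) auto
  also have "\<dots> = real_of_nat (fact k)"
    using Ici split eqnn I_def by simp
  finally have "I \<le> real_of_nat (fact k)" .
  then have Ifin: "I < \<infinity>" by (simp add: order_le_less_trans)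
  then obtain r where r: "I = ennreal r" "0 \<le> r"
    by (cases I) auto
  have "ennreal (real_of_nat (fact k)) = ennreal ((1 - (\<Sum>n\<le>k. (x^n * exp (-x)) / fact n)) * fact k + r)"
    using Ici split Icc eqnn I_def r sumle by (simp add: ennreal_plus[symmetric])
  then have req: "r = fact k - (1 - (\<Sum>n\<le>k. (x^n * exp (-x)) / fact n)) * fact k"
    using r sumle by (subst (asm) ennreal_inj) auto
  have "upper_inc_gamma (real (Suc k)) x = integral\<^sup>L lborel (\<lambda>t. indicator {x<..} t * ?f t)"
    unfolding upper_inc_gamma_def set_lebesgue_integral_def
  proof (rule integral_cong_AE)
    show "AE t in lborel. indicator {x..} t *\<^sub>R (t powr (real (Suc k) - 1) * exp (- t)) = indicator {x<..} t * ?f t"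
      using AE_lborel_singleton[of x] AE_lborel_singleton[of 0]
    proof eventually_elim
      case (elim t) then show ?case using x
        by (auto split: split_indicator simp: powr_realpow)
    qed
  qed auto
  also have "\<dots> = enn2real I"
    unfolding I_def by (rule integral_eq_nn_integral) (use nn in auto)
  also have "\<dots> = fact k * Qs k x"
    using r req by (simp add: Qs_def sum_distrib_left algebra_simps sum_divide_distrib)
  finally show ?thesis .
qed

lemma Qs_Suc: "Qs (Suc k) x = Qs k x + exp (- x) * x ^ Suc k / fact (Suc k)"
  by (simp add: Qs_def algebra_simps)

lemma Qs_0: "Qs k 0 = 1"
  by (induction k) (simp_all add: Qs_def)

lemma pow_fact_deriv: "((\<lambda>x::real. x ^ Suc k / fact (Suc k)) has_real_derivative (x ^ k / fact k)) (at x)"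
proof -
  have "((\<lambda>x::real. x ^ Suc k / fact (Suc k)) has_real_derivative (real (Suc k) * x ^ k / fact (Suc k))) (at x)"
    by (intro DERIV_cdivide) (use DERIV_pow[of "Suc k" x] in simp)
  moreover have "real (Suc k) * x ^ k / fact (Suc k) = x ^ k / fact k"
    by (simp add: fact_Suc del: of_nat_Suc)
  ultimately show ?thesis by simp
qed

lemma Qs_deriv: "(Qs k has_real_derivative (- (exp (-x) * x ^ k / fact k))) (at x)"
proof (induction k arbitrary: x)
  case 0
  have "Qs 0 = (\<lambda>x. exp (- x))" by (auto simp: Qs_def)
  then show ?case by (auto intro!: derivative_eq_intros)
next
  case (Suc k)
  have e: "Qs (Suc k) = (\<lambda>x. Qs k x + exp (- x) * (x ^ Suc k / fact (Suc k)))"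
    by (auto simp: Qs_Suc)
  have d1: "((\<lambda>x. exp (- x)) has_real_derivative - exp (-x)) (at x)"
    by (auto intro!: derivative_eq_intros)
  have d: "((\<lambda>x. exp (- x) * (x ^ Suc k / fact (Suc k))) has_real_derivative
     (exp (-x) * (x ^ k / fact k) + (- exp (-x)) * (x ^ Suc k / fact (Suc k)))) (at x)"
    using DERIV_mult[OF d1 pow_fact_deriv[of k x]] by (simp add: algebra_simps)
  show ?case unfolding e
    using DERIV_add[OF Suc[of x] d] by simp
qed

lemma Aq_le_pow:
  assumes "0 \<le> x" shows "1 - Qs k x \<le> x ^ Suc k / fact (Suc k)"
proof -
  let ?h = "\<lambda>x. x ^ Suc k / fact (Suc k) + Qs k x"
  have "?h 0 \<le> ?h x"
  proof (rule DERIV_nonneg_imp_nondecreasing[OF assms])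
    fix t :: real assume t: "0 \<le> t" "t \<le> x"
    have "(?h has_real_derivative (t ^ k / fact k + - (exp (-t) * t ^ k / fact k))) (at t)"
      by (rule DERIV_add[OF pow_fact_deriv Qs_deriv])
    moreover have "0 \<le> t ^ k / fact k + - (exp (-t) * t ^ k / fact k)"
    proof -
      have "exp (-t) * (t ^ k / fact k) \<le> 1 * (t ^ k / fact k)"
        using t by (intro mult_right_mono) auto
      then show ?thesis by simp
    qed
    ultimately show "\<exists>y. (?h has_real_derivative y) (at t) \<and> 0 \<le> y" by blast
  qed
  then show ?thesis by (simp add: Qs_0)
qed

lemma Aq_upper:
  assumes x: "0 \<le> x" shows "1 - Qs k x \<le> (1 - exp (- x)) ^ Suc k"
proof (induction k)
  case 0
  then show ?case by (simp add: Qs_def)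
next
  case (Suc k)
  have "1 - Qs (Suc k) x = (1 - exp (-x)) * (1 - Qs k x) + exp (-x) * ((1 - Qs k x) - x ^ Suc k / fact (Suc k))"
    by (simp add: Qs_Suc algebra_simps)
  also have "\<dots> \<le> (1 - exp (-x)) * (1 - Qs k x)"
    using Aq_le_pow[OF x, of k] by (simp add: mult_nonpos_nonneg mult_le_0_iff)
  also have "\<dots> \<le> (1 - exp (-x)) * (1 - exp (- x)) ^ Suc k"
    using Suc x by (intro mult_left_mono) auto
  finally show ?case by simp
qed

lemma SC_lift:
  fixes h h' :: "real \<Rightarrow> real"
  assumes h0: "h 0 = 0"
    and hd: "\<And>z. 0 \<le> z \<Longrightarrow> (h has_real_derivative h' z) (at z)"
    and sc: "\<And>t y. 0 < t \<Longrightarrow> t < y \<Longrightarrow> 0 < h' t \<Longrightarrow> 0 < h' y"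
    and t: "0 < t" "t < y" "0 < h t"
  shows "0 < h y"
proof -
  have "continuous_on {0..t} h"
    using hd by (intro continuous_at_imp_continuous_on) (meson DERIV_isCont atLeastAtMost_iff)
  moreover have "\<And>x. 0 < x \<Longrightarrow> x < t \<Longrightarrow> h differentiable (at x)"
    using hd by (meson less_imp_le real_differentiable_def)
  ultimately obtain l z where z: "0 < z" "z < t" "(h has_real_derivative l) (at z)" "h t - h 0 = (t - 0) * l"
    using MVT[OF t(1)] by blast
  have "l = h' z" using z(3) hd[of z] z(1) by (auto intro: DERIV_unique)
  moreover have "0 < l" using z(4) h0 t by (simp add: zero_less_mult_iff)
  ultimately have hz: "0 < h' z" by simp
  have "h t \<le> h y"
  proof (rule DERIV_nonneg_imp_nondecreasing[of t y h])
    show "t \<le> y" using t by simp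
    fix w assume w: "t \<le> w" "w \<le> y"
    have "0 < h' w" using sc[OF z(1) _ hz, of w] w z by simp
    then show "\<exists>d. (h has_real_derivative d) (at w) \<and> 0 \<le> d"
      using hd[of w] w t by (auto intro!: exI[of _ "h' w"])
  qed
  then show ?thesis using t by simp
qed

definition kap :: "real \<Rightarrow> real \<Rightarrow> real" where
  "kap c z = exp (c * z) - exp ((c - 1) * z) - z"

lemma kap_SC:
  assumes "0 < t" "t < y" "0 < kap c t" shows "0 < kap c y"
proof -
  define k1 where "k1 z = c * exp (c * z) - (c - 1) * exp ((c - 1) * z) - 1" for z
  define k2 where "k2 z = c\<^sup>2 * exp (c * z) - (c - 1)\<^sup>2 * exp ((c - 1) * z)" for z
  have d1: "(kap c has_real_derivative k1 z) (at z)" for z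
    unfolding kap_def[abs_def] k1_def
    by (auto intro!: derivative_eq_intros simp: algebra_simps)
  have d2: "(k1 has_real_derivative k2 z) (at z)" for z
    unfolding k1_def[abs_def] k2_def
    by (auto intro!: derivative_eq_intros simp: algebra_simps power2_eq_square)
  have k2e: "k2 z = exp ((c - 1) * z) * (c\<^sup>2 * exp z - (c - 1)\<^sup>2)" for z
    unfolding k2_def by (simp add: algebra_simps flip: exp_add)
  have sc2: "0 < k2 y" if "0 < t" "t < y" "0 < k2 t" for t y
  proof -
    have "c\<^sup>2 * exp t \<le> c\<^sup>2 * exp y" using that by (intro mult_left_mono) auto
    then show ?thesis using that by (simp add: k2e zero_less_mult_iff)
  qed
  have sc1: "0 < k1 y" if "0 < t" "t < y" "0 < k1 t" for t y
    by (rule SC_lift[of k1 k2, OF _ d2 sc2 that]) (auto simp: k1_def)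
  show ?thesis
    by (rule SC_lift[of "kap c" k1, OF _ d1 sc1 assms]) (auto simp: kap_def)
qed

lemma Qs_lim: "(Qs k \<longlongrightarrow> 0) at_top"
proof -
  have e: "Qs k = (\<lambda>t. \<Sum>n\<le>k. (t ^ n / exp t) / fact n)"
    by (auto simp: Qs_def sum_distrib_left exp_minus field_simps intro!: sum.cong)
  have "\<forall>n\<in>{..k}. ((\<lambda>t::real. t ^ n / exp t / fact n) \<longlongrightarrow> 0) at_top"
    by (intro ballI tendsto_divide_zero tendsto_power_div_exp_0)
  then have "((\<lambda>t::real. \<Sum>n\<le>k. t ^ n / exp t / fact n) \<longlongrightarrow> (\<Sum>n\<le>k. (0::real))) at_top"
    by (intro tendsto_sum) auto
  then show ?thesis unfolding e by simp
qed

lemma exp_neg_lim: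
  assumes b: "0 < (b::real)" shows "((\<lambda>y. exp (- (b * y))) \<longlongrightarrow> 0) at_top"
proof -
  have "LIM y at_top. b * y :> at_top"
    by (rule filterlim_tendsto_pos_mult_at_top[OF tendsto_const b filterlim_ident])
  then have "LIM y at_top. - (b * y) :> at_bot"
    unfolding filterlim_uminus_at_top .
  then show ?thesis by (rule filterlim_compose[OF exp_at_bot])
qed

lemma Aq_lower:
  assumes x: "0 \<le> x" and b: "0 < b" and bf: "b ^ Suc k * fact (Suc k) = 1"
  shows "(1 - exp (- (b * x))) ^ Suc k \<le> 1 - Qs k x"
proof (cases "k = 0")
  case True
  then have "b = 1" using bf by simp
  then show ?thesis using True by (simp add: Qs_def)
next
  case False
  then have kpos: "0 < k" by simp
  define f' where "f' t = exp (- t) * t ^ k / fact k" for t :: real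
  define g' where "g' t = real (Suc k) * (1 - exp (- (b * t))) ^ k * (b * exp (- (b * t)))" for t :: real
  define D where "D t = (1 - Qs k t) - (1 - exp (- (b * t))) ^ Suc k" for t :: real
  define c where "c = (1 - b) / (b * real k)"
  have dD: "(D has_real_derivative (f' t - g' t)) (at t)" for t
  proof -
    have d1: "((\<lambda>t. 1 - Qs k t) has_real_derivative f' t) (at t)"
      using DERIV_diff[OF DERIV_const[of 1] Qs_deriv[of k t]] by (simp add: f'_def)
    have d2: "((\<lambda>t. (1 - exp (- (b * t))) ^ Suc k) has_real_derivative g' t) (at t)"
    proof -
      have "((\<lambda>t. 1 - exp (- (b * t))) has_real_derivative b * exp (- (b * t))) (at t)"
        by (auto intro!: derivative_eq_intros)
      from DERIV_power[OF this, of "Suc k"] show ?thesis by (simp add: g'_def algebra_simps)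
    qed
    show ?thesis using DERIV_diff[OF d1 d2] unfolding D_def[abs_def] .
  qed
  have cross: "f' t < g' t \<longleftrightarrow> 0 < kap c (b * t)" if t: "0 < t" for t
  proof -
    define z where "z = b * t"
    define u where "u = z * exp (- (c * z))"
    define v where "v = 1 - exp (- z)"
    define P where "P = fact k * b ^ k * exp (b * t)"
    have z: "0 < z" using b t by (simp add: z_def)
    have Ppos: "0 < P" using b by (simp add: P_def)
    have kcb: "real k * (c * z) = (1 - b) * t"
      unfolding c_def z_def using kpos b by (simp add: field_simps)
    have "u ^ k = z ^ k * exp (- (c * z)) ^ k" by (simp add: u_def power_mult_distrib)
    also have "exp (- (c * z)) ^ k = exp (- (real k * (c * z)))"
      by (simp add: exp_of_nat_mult[symmetric])
    also have "\<dots> = exp (- t) * exp (b * t)" by (subst kcb) (simp add: algebra_simps flip: exp_add)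
    finally have hu: "f' t * P = u ^ k"
      by (simp add: f'_def P_def z_def power_mult_distrib)
    have "g' t * P = (b ^ Suc k * fact (Suc k)) * v ^ k * (exp (- (b * t)) * exp (b * t))"
      by (simp add: g'_def P_def v_def z_def fact_Suc del: of_nat_Suc)
    also have "\<dots> = v ^ k" unfolding bf by (simp flip: exp_add)
    finally have hv: "g' t * P = v ^ k" .
    have "f' t < g' t \<longleftrightarrow> f' t * P < g' t * P" using Ppos by simp
    also have "\<dots> \<longleftrightarrow> u ^ k < v ^ k" by (simp add: hu hv)
    also have "\<dots> \<longleftrightarrow> u < v"
    proof
      assume "u ^ k < v ^ k" then show "u < v"
        by (rule power_less_imp_less_base) (use z in \<open>simp add: v_def\<close>)
    next
      assume "u < v" then show "u ^ k < v ^ k"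
        by (rule power_strict_mono) (use z kpos in \<open>simp_all add: u_def\<close>)
    qed
    also have "\<dots> \<longleftrightarrow> 0 < exp (c * z) * (v - u)" by (simp add: zero_less_mult_iff)
    also have "exp (c * z) * (v - u) = kap c z"
      by (simp add: u_def v_def kap_def algebra_simps flip: exp_add)
    finally show ?thesis by (simp add: z_def)
  qed
  have D0: "D 0 = 0" by (simp add: D_def Qs_0)
  have Dlim: "(D \<longlongrightarrow> 0) at_top"
  proof -
    have "((\<lambda>t. (1 - Qs k t) - (1 - exp (- (b * t))) ^ Suc k) \<longlongrightarrow> (1 - 0) - (1 - 0) ^ Suc k) at_top"
      by (intro tendsto_diff tendsto_power tendsto_const Qs_lim exp_neg_lim b)
    then show ?thesis by (simp add: D_def[abs_def])
  qed
  show ?thesis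
  proof (cases "\<exists>t. 0 < t \<and> t \<le> x \<and> f' t < g' t")
    case False
    note nocross = False
    have "D 0 \<le> D x"
    proof (rule DERIV_nonneg_imp_nondecreasing[of 0 x D, OF x])
      fix w assume w: "0 \<le> w" "w \<le> x"
      have "0 \<le> f' w - g' w"
      proof (cases "w = 0")
        case True then show ?thesis using kpos by (simp add: f'_def g'_def power_0_left)
      next
        case False then show ?thesis using w nocross by force
      qed
      then show "\<exists>y. (D has_real_derivative y) (at w) \<and> 0 \<le> y" using dD by blast
    qed
    then show ?thesis by (simp add: D_def Qs_0)
  next
    case True
    then obtain t where t: "0 < t" "t \<le> x" "f' t < g' t" by blast
    have later: "f' y < g' y" if y: "x \<le> y" for y
    proof (cases "y = t")
      case True then show ?thesis using t by simp
    next
      case False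
      then have "t < y" using t y by simp
      have "0 < kap c (b * t)" using cross[OF t(1)] t by simp
      then have "0 < kap c (b * y)"
        by (rule kap_SC[rotated 2]) (use b t \<open>t < y\<close> in auto)
      then show ?thesis using cross[of y] t \<open>t < y\<close> by simp
    qed
    have "D y \<le> D x" if y: "x \<le> y" for y
    proof (rule DERIV_nonpos_imp_nonincreasing[of x y D, OF y])
      fix w assume w: "x \<le> w" "w \<le> y"
      have "f' w - g' w \<le> 0" using later[of w] w by simp
      then show "\<exists>d. (D has_real_derivative d) (at w) \<and> d \<le> 0" using dD by blast
    qed
    then have "eventually (\<lambda>y. D y \<le> D x) at_top"
      by (auto simp: eventually_at_top_linorder)
    then have "0 \<le> D x"
      by (rule tendsto_le[OF trivial_limit_at_top_linorder tendsto_const Dlim])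
    then show ?thesis by (simp add: D_def)
  qed
qed

lemma one_minus_pow_binom:
  fixes y :: real
  shows "(1 - y) ^ n = (\<Sum>k = 0..n. real (n choose k) * (-1) ^ k * y ^ k)"
proof -
  have "(1 - y) ^ n = (- y + 1) ^ n" by simp
  also have "\<dots> = (\<Sum>k\<le>n. real (n choose k) * (- y) ^ k * 1 ^ (n - k))"
    by (rule binomial_ring)
  also have "\<dots> = (\<Sum>k = 0..n. real (n choose k) * (-1) ^ k * y ^ k)"
    by (simp add: atLeast0AtMost power_minus[of y] mult.assoc)
  finally show ?thesis .
qed

lemma base_nn:
  fixes s \<rho> a :: real
  assumes s: "s < 1" and r: "0 < \<rho>"
  shows "(\<integral>\<^sup>+x. ennreal (indicator {0..} x * (\<rho> * (1 + \<rho> * x) powr (s - 2))) \<partial>lborel) = ennreal (1 / (1 - s))"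
proof -
  have hi: "((\<lambda>u. u powr (s - 2)) has_integral - (1 powr (s - 2 + 1)) / (s - 2 + 1)) {1..}"
    by (rule has_integral_powr_to_inf) (use s in auto)
  have "(\<integral>\<^sup>+u. ennreal (u powr (s - 2)) * indicator {1..} u \<partial>lborel) = ennreal (- (1 powr (s - 2 + 1)) / (s - 2 + 1))"
    by (rule nn_integral_has_integral_lebesgue'[OF _ hi]) auto
  also have "- (1 powr (s - 2 + 1)) / (s - 2 + 1) = 1 / (1 - s)"
    using s by (simp add: field_simps)
  finally have n1: "(\<integral>\<^sup>+u. ennreal (u powr (s - 2)) * indicator {1..} u \<partial>lborel) = ennreal (1 / (1 - s))" .
  have "(\<integral>\<^sup>+u. ennreal (u powr (s - 2)) * indicator {1..} u \<partial>lborel)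
     = \<bar>\<rho>\<bar> * (\<integral>\<^sup>+x. ennreal ((1 + \<rho> * x) powr (s - 2)) * indicator {1..} (1 + \<rho> * x) \<partial>lborel)"
    by (rule nn_integral_real_affine) (use r in auto)
  also have "\<dots> = (\<integral>\<^sup>+x. ennreal \<rho> * (ennreal ((1 + \<rho> * x) powr (s - 2)) * indicator {1..} (1 + \<rho> * x)) \<partial>lborel)"
    by (subst nn_integral_cmult) (use r in auto)
  also have "\<dots> = (\<integral>\<^sup>+x. ennreal (indicator {0..} x * (\<rho> * (1 + \<rho> * x) powr (s - 2))) \<partial>lborel)"
    using r by (intro nn_integral_cong) (auto split: split_indicator simp: ennreal_mult zero_le_mult_iff)
  finally show ?thesis using n1 by simp
qed

lemma base_hasint:
  fixes s \<rho> a :: real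
  assumes s: "s < 1" and r: "0 < \<rho>"
  shows "has_bochner_integral lborel (\<lambda>x. indicator {0..} x * (\<rho> * (1 + \<rho> * x) powr (s - 2))) (1 / (1 - s))"
  by (rule has_bochner_integral_nn_integral[OF _ _ _ base_nn[OF s r]]) (use s r in auto)

lemma exp_integrable:
  fixes s \<rho> a :: real
  assumes s: "s < 1" and r: "0 < \<rho>" and a: "0 \<le> a"
  shows "integrable lborel (\<lambda>x. indicator {0..} x * (\<rho> * (1 + \<rho> * x) powr (s - 2) * exp (- (a * x))))"
proof (rule Bochner_Integration.integrable_bound[OF integrable.intros[OF base_hasint[OF s r]]])
  show "AE x in lborel. norm (indicator {0..} x * (\<rho> * (1 + \<rho> * x) powr (s - 2) * exp (- (a * x))))
     \<le> norm (indicator {0..} x * (\<rho> * (1 + \<rho> * x) powr (s - 2)))"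
  proof (rule AE_I2)
    fix x :: real
    show "norm (indicator {0..} x * (\<rho> * (1 + \<rho> * x) powr (s - 2) * exp (- (a * x))))
     \<le> norm (indicator {0..} x * (\<rho> * (1 + \<rho> * x) powr (s - 2)))"
    proof (cases "0 \<le> x")
      case True
      have "exp (- (a * x)) \<le> 1" using a True by (simp add: mult_nonneg_nonneg)
      then have "\<rho> * (1 + \<rho> * x) powr (s - 2) * exp (- (a * x)) \<le> \<rho> * (1 + \<rho> * x) powr (s - 2) * 1"
        using r by (intro mult_left_mono) auto
      then show ?thesis using True r by (simp add: abs_mult)
    qed simp
  qed
qed measurable

lemma exp_integral:
  fixes s \<rho> a :: real
  assumes s: "s < 1" and r: "0 < \<rho>" and a: "0 \<le> a"
  shows "integral\<^sup>L lborel (\<lambda>x. indicator {0..} x * (\<rho> * (1 + \<rho> * x) powr (s - 2) * exp (- (a * x))))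
     = inc_gamma_factor s (a / \<rho>)"
proof (cases "a = 0")
  case True
  then show ?thesis using has_bochner_integral_integral_eq[OF base_hasint[OF s r]]
    by (simp add: inc_gamma_factor_def)
next
  case False
  then have a: "0 < a" using a by simp
  define c where "c = a / \<rho>"
  have c: "0 < c" using a r by (simp add: c_def)
  have ac: "a = c * \<rho>" using r by (simp add: c_def)
  define J where "J = integral\<^sup>L lborel (\<lambda>x. indicator {0..} x * ((1 + \<rho> * x) powr (s - 2) * exp (- (a * x))))"
  have "upper_inc_gamma (s - 1) c = integral\<^sup>L lborel (\<lambda>v. indicator {c..} v * (v powr (s - 2) * exp (- v)))"
    by (simp add: upper_inc_gamma_def set_lebesgue_integral_def)
  also have "\<dots> = \<bar>a\<bar> *\<^sub>R integral\<^sup>L lborel (\<lambda>x. indicator {c..} (c + a * x) * ((c + a * x) powr (s - 2) * exp (- (c + a * x))))"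
    by (rule lborel_integral_real_affine) (use a in simp)
  also have "(\<lambda>x. indicator {c..} (c + a * x) * ((c + a * x) powr (s - 2) * exp (- (c + a * x))))
     = (\<lambda>x. (c powr (s - 2) * exp (- c)) * (indicator {0..} x * ((1 + \<rho> * x) powr (s - 2) * exp (- (a * x)))))"
  proof
    fix x :: real
    show "indicator {c..} (c + a * x) * ((c + a * x) powr (s - 2) * exp (- (c + a * x)))
      = (c powr (s - 2) * exp (- c)) * (indicator {0..} x * ((1 + \<rho> * x) powr (s - 2) * exp (- (a * x))))"
    proof (cases "0 \<le> x")
      case True
      have e1: "c + a * x = c * (1 + \<rho> * x)" by (simp add: ac algebra_simps)
      have "(c + a * x) powr (s - 2) = c powr (s - 2) * (1 + \<rho> * x) powr (s - 2)"
        unfolding e1 using c r True by (simp add: powr_mult)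
      moreover have "exp (- (c + a * x)) = exp (- c) * exp (- (a * x))"
        by (simp flip: exp_add)
      ultimately show ?thesis using True a by (simp add: indicator_def)
    next
      case False
      then have "a * x < 0" using a by (simp add: mult_pos_neg)
      then show ?thesis using False by (simp add: indicator_def)
    qed
  qed
  finally have ug: "upper_inc_gamma (s - 1) c = a * (c powr (s - 2) * exp (- c)) * J"
    using a by (simp add: J_def)
  have "inc_gamma_factor s c = exp c * c powr (1 - s) * (a * (c powr (s - 2) * exp (- c)) * J)"
    using c by (simp add: inc_gamma_factor_def ug)
  also have "\<dots> = a * (c powr (1 - s) * c powr (s - 2)) * (exp c * exp (- c)) * J"
    by (simp add: algebra_simps)
  also have "c powr (1 - s) * c powr (s - 2) = c powr (- 1)"
    by (simp flip: powr_add)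
  also have "exp c * exp (- c) = 1" by (simp flip: exp_add)
  also have "a * c powr (- 1) = \<rho>"
    using c r by (simp add: ac powr_minus)
  finally have "inc_gamma_factor s c = \<rho> * J" by simp
  moreover have "integral\<^sup>L lborel (\<lambda>x. indicator {0..} x * (\<rho> * (1 + \<rho> * x) powr (s - 2) * exp (- (a * x)))) = \<rho> * J"
    unfolding J_def by (simp flip: integral_mult_right_zero add: algebra_simps)
  ultimately show ?thesis by (simp add: c_def)
qed

lemma Sb_expand:
  fixes e :: real
  shows "(1 - (1 - e) ^ M) ^ K = (\<Sum>k = 0..K. \<Sum>j = 0..k * M.
      real (K choose k) * real ((k * M) choose j) * (-1) ^ (k + j) * e ^ j)"
proof -
  have "(1 - (1 - e) ^ M) ^ K = (\<Sum>k = 0..K. real (K choose k) * (-1) ^ k * ((1 - e) ^ M) ^ k)"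
    by (rule one_minus_pow_binom)
  also have "\<dots> = (\<Sum>k = 0..K. real (K choose k) * (-1) ^ k * (\<Sum>j = 0..k * M. real ((k * M) choose j) * (-1) ^ j * e ^ j))"
  proof (intro sum.cong refl)
    fix k
    have "((1 - e) ^ M) ^ k = (1 - e) ^ (k * M)" by (simp add: power_mult[symmetric] mult.commute)
    then show "real (K choose k) * (-1) ^ k * ((1 - e) ^ M) ^ k = real (K choose k) * (-1) ^ k * (\<Sum>j = 0..k * M. real ((k * M) choose j) * (-1) ^ j * e ^ j)"
      by (simp only: one_minus_pow_binom)
  qed
  also have "\<dots> = (\<Sum>k = 0..K. \<Sum>j = 0..k * M.
      real (K choose k) * real ((k * M) choose j) * (-1) ^ (k + j) * e ^ j)"
    by (intro sum.cong refl) (simp add: sum_distrib_left power_add mult_ac)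
  finally show ?thesis .
qed

lemma Sb_integral:
  fixes s \<rho> \<beta> :: real and M K :: nat
  assumes s: "s < 1" and r: "0 < \<rho>" and b: "0 \<le> \<beta>"
  shows "integrable lborel (\<lambda>t. indicator {0..} t * (\<rho> * (1 + \<rho> * t) powr (s - 2) * (1 - (1 - exp (- (\<beta> * t))) ^ M) ^ K))"
    and "integral\<^sup>L lborel (\<lambda>t. indicator {0..} t * (\<rho> * (1 + \<rho> * t) powr (s - 2) * (1 - (1 - exp (- (\<beta> * t))) ^ M) ^ K))
       = Bfun M K \<rho> s \<beta>"
proof -
  define F where "F j t = indicator {0..} t * (\<rho> * (1 + \<rho> * t) powr (s - 2) * exp (- ((real j * \<beta>) * t)))" for j :: nat and t :: real
  define C where "C k j = real (K choose k) * real ((k * M) choose j) * (-1) ^ (k + j)" for k j :: nat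
  have eq: "(\<lambda>t. indicator {0..} t * (\<rho> * (1 + \<rho> * t) powr (s - 2) * (1 - (1 - exp (- (\<beta> * t))) ^ M) ^ K))
     = (\<lambda>t. \<Sum>k = 0..K. \<Sum>j = 0..k * M. C k j * F j t)"
  proof
    fix t :: real
    have ej: "exp (- (\<beta> * t)) ^ j = exp (- ((real j * \<beta>) * t))" for j :: nat
      by (simp add: exp_of_nat_mult[symmetric])
    show "indicator {0..} t * (\<rho> * (1 + \<rho> * t) powr (s - 2) * (1 - (1 - exp (- (\<beta> * t))) ^ M) ^ K)
      = (\<Sum>k = 0..K. \<Sum>j = 0..k * M. C k j * F j t)"
      unfolding Sb_expand F_def C_def ej
      by (simp add: sum_distrib_left sum_distrib_right mult_ac)
  qed
  have intF: "integrable lborel (F j)" for j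
    unfolding F_def[abs_def] by (rule exp_integrable[OF s r]) (use b in simp)
  have valF: "integral\<^sup>L lborel (F j) = inc_gamma_factor s (real j * \<beta> / \<rho>)" for j
    unfolding F_def[abs_def] by (rule exp_integral[OF s r]) (use b in simp)
  show "integrable lborel (\<lambda>t. indicator {0..} t * (\<rho> * (1 + \<rho> * t) powr (s - 2) * (1 - (1 - exp (- (\<beta> * t))) ^ M) ^ K))"
    unfolding eq using intF by auto
  have "integral\<^sup>L lborel (\<lambda>t. \<Sum>k = 0..K. \<Sum>j = 0..k * M. C k j * F j t)
      = (\<Sum>k = 0..K. \<Sum>j = 0..k * M. C k j * integral\<^sup>L lborel (F j))"
    using intF by (simp add: integral_sum)
  also have "\<dots> = Bfun M K \<rho> s \<beta>"
    by (simp add: valF Bfun_def C_def)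
  finally show "integral\<^sup>L lborel (\<lambda>t. indicator {0..} t * (\<rho> * (1 + \<rho> * t) powr (s - 2) * (1 - (1 - exp (- (\<beta> * t))) ^ M) ^ K))
       = Bfun M K \<rho> s \<beta>"
    unfolding eq .
qed

lemma psi_repr:
  fixes s \<rho> m :: real
  assumes s: "s < 1" and r: "0 < \<rho>" and m: "0 \<le> m"
  shows "(\<integral>\<^sup>+t. ennreal (indicator {0..} t * (\<rho> * (1 + \<rho> * t) powr (s - 2))) * (if t < m then 1 else 0) \<partial>lborel)
     = ennreal ((1 - (1 + \<rho> * m) powr (s - 1)) / (1 - s))"
proof -
  define H where "H t = (1 + \<rho> * t) powr (s - 1) / (s - 1)" for t
  have "((\<lambda>t. \<rho> * (1 + \<rho> * t) powr (s - 2)) has_integral (H m - H 0)) {0..m}"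
  proof (rule fundamental_theorem_of_calculus[OF m])
    fix t assume t: "t \<in> {0..m}"
    have pos: "0 < 1 + \<rho> * t" using t r by (simp add: add_pos_nonneg)
    have "((\<lambda>t. 1 + \<rho> * t) has_real_derivative \<rho>) (at t)"
      by (auto intro!: derivative_eq_intros)
    from DERIV_fun_powr[OF this pos, of "s - 1"]
    have "(H has_real_derivative (s - 1) * (1 + \<rho> * t) powr (s - 1 - 1) * \<rho> / (s - 1)) (at t)"
      unfolding H_def by (intro DERIV_cdivide) simp
    moreover have "(s - 1) * (1 + \<rho> * t) powr (s - 1 - 1) * \<rho> / (s - 1) = \<rho> * (1 + \<rho> * t) powr (s - 2)"
      using s by (simp add: field_simps)
    ultimately have "(H has_real_derivative \<rho> * (1 + \<rho> * t) powr (s - 2)) (at t)" by simp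
    then show "(H has_vector_derivative \<rho> * (1 + \<rho> * t) powr (s - 2)) (at t within {0..m})"
      by (simp add: has_real_derivative_iff_has_vector_derivative[symmetric] has_field_derivative_at_within)
  qed
  moreover have "H m - H 0 = (1 - (1 + \<rho> * m) powr (s - 1)) / (1 - s)"
  proof -
    have "H m - H 0 = ((1 + \<rho> * m) powr (s - 1) - 1) / (s - 1)" by (simp add: H_def diff_divide_distrib)
    also have "\<dots> = (1 - (1 + \<rho> * m) powr (s - 1)) / (1 - s)" by (metis minus_diff_eq minus_divide_divide)
    finally show ?thesis .
  qed
  ultimately have hi: "((\<lambda>t. \<rho> * (1 + \<rho> * t) powr (s - 2)) has_integral ((1 - (1 + \<rho> * m) powr (s - 1)) / (1 - s))) {0..m}"
    by simp
  have "(\<integral>\<^sup>+t. ennreal (\<rho> * (1 + \<rho> * t) powr (s - 2)) * indicator {0..m} t \<partial>lborel)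
     = ennreal ((1 - (1 + \<rho> * m) powr (s - 1)) / (1 - s))"
    by (rule nn_integral_has_integral_lebesgue'[OF _ hi]) (use r in auto)
  moreover have "(\<integral>\<^sup>+t. ennreal (indicator {0..} t * (\<rho> * (1 + \<rho> * t) powr (s - 2))) * (if t < m then 1 else 0) \<partial>lborel)
     = (\<integral>\<^sup>+t. ennreal (\<rho> * (1 + \<rho> * t) powr (s - 2)) * indicator {0..m} t \<partial>lborel)"
    using AE_lborel_singleton[of m]
    by (intro nn_integral_cong_AE) (auto elim!: eventually_mono split: split_indicator)
  ultimately show ?thesis by simp
qed

lemma b_props:
  fixes M :: nat assumes "1 \<le> M"
  shows "0 < Gamma (1 + real M) powr (- 1 / real M)"
    and "(Gamma (1 + real M) powr (- 1 / real M)) ^ M * fact M = 1"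
proof -
  have g: "Gamma (1 + real M) = fact M" using Gamma_fact[of M] by simp
  show "0 < Gamma (1 + real M) powr (- 1 / real M)" unfolding g by simp
  have "(fact M powr (- 1 / real M)) ^ M = (fact M :: real) powr (real M * (- 1 / real M))"
    by (rule powr_power) simp
  also have "\<dots> = (fact M :: real) powr (- 1)" using assms by simp
  finally show "(Gamma (1 + real M) powr (- 1 / real M)) ^ M * fact M = 1"
    unfolding g by (simp add: powr_minus)
qed

theorem lemma1:
  fixes M K :: nat and \<rho> s :: real
    and P :: "'a measure" and X :: "nat \<Rightarrow> 'a \<Rightarrow> real"
  assumes "prob_space P"
    and "M \<ge> 1" and "K \<ge> 1" and "\<rho> > 0"
    and "\<forall>k<K. X k \<in> borel_measurable P"
    and "prob_space.indep_vars P (\<lambda>_. borel) X {..<K}"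
    and "\<forall>k<K. \<forall>x::real. measure P {\<omega> \<in> space P. X k \<omega> \<le> x}
           = (if x \<ge> 0 then 1 - upper_inc_gamma (real M) x / Gamma (real M) else 0)"
    and "s < 1"
  shows "1 + (s - 1) * Bfun M K \<rho> s (Gamma (1 + real M) powr (- 1 / real M))
           \<le> (\<integral>\<omega>. (1 + \<rho> * Min {X k \<omega> | k. k < K}) powr (s - 1) \<partial>P)
      \<and> (\<integral>\<omega>. (1 + \<rho> * Min {X k \<omega> | k. k < K}) powr (s - 1) \<partial>P)
           \<le> 1 + (s - 1) * Bfun M K \<rho> s 1"
proof -
  interpret prob_space P by fact
  note Xmeas = assms(5) and indep = assms(6) and cdf = assms(7)
  have r: "0 < \<rho>" and s: "s < 1" and K1: "1 \<le> K" using assms by auto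
  obtain k0 where M: "M = Suc k0" using assms(2) by (cases M) auto
  define b where "b = Gamma (1 + real M) powr (- 1 / real M)"
  have b: "0 < b" "b ^ Suc k0 * fact (Suc k0) = 1"
    using b_props[OF assms(2)] by (simp_all add: b_def M)
  define m where "m = (\<lambda>\<omega>. Min {X k \<omega> | k. k < K})"
  have mset: "{X k \<omega> | k. k < K} = (\<lambda>k. X k \<omega>) ` {..<K}" for \<omega> by auto
  have "0 \<in> {..<K}" using K1 by simp
  then have Kne: "{..<K} \<noteq> {}" by blast
  have m_meas[measurable]: "m \<in> borel_measurable P"
    unfolding m_def mset by (rule borel_measurable_Min) (use Xmeas in auto)

  have Xgt: "prob {\<omega> \<in> space P. t < X k \<omega>} = Qs k0 t" if t: "0 \<le> t" and k: "k < K" for t k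
  proof -
    have [measurable]: "X k \<in> borel_measurable P" using Xmeas k by auto
    have "prob {\<omega> \<in> space P. t < X k \<omega>} = prob (space P - {\<omega> \<in> space P. X k \<omega> \<le> t})"
      by (intro arg_cong[where f=prob]) auto
    also have "\<dots> = 1 - prob {\<omega> \<in> space P. X k \<omega> \<le> t}"
      by (rule prob_compl) measurable
    also have "prob {\<omega> \<in> space P. X k \<omega> \<le> t} = 1 - upper_inc_gamma (real M) t / Gamma (real M)"
      using cdf k t by simp
    also have "upper_inc_gamma (real M) t / Gamma (real M) = Qs k0 t"
    proof -
      have "Gamma (real (Suc k0)) = fact k0" using Gamma_fact[of k0] by (simp add: add.commute)
      then show ?thesis using gamma_tail[OF t, of k0] by (simp add: M)
    qed
    finally show ?thesis by simp
  qed

  have Sgt: "prob {\<omega> \<in> space P. t < m \<omega>} = Qs k0 t ^ K" if t: "0 \<le> t" for t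
  proof -
    have ev: "{\<omega> \<in> space P. t < m \<omega>} = (\<Inter>k\<in>{..<K}. X k -` {t<..} \<inter> space P)"
      using Kne by (auto simp: m_def mset Min_gr_iff)
    have "prob (\<Inter>k\<in>{..<K}. X k -` {t<..} \<inter> space P) = (\<Prod>k\<in>{..<K}. prob (X k -` {t<..} \<inter> space P))"
    proof (rule indep_setsD[where F="\<lambda>i. {X i -` A \<inter> space P | A. A \<in> sets borel}"])
      show "indep_sets (\<lambda>i. {X i -` A \<inter> space P | A. A \<in> sets borel}) {..<K}"
        using indep unfolding indep_vars_def2 by simp
      show "\<forall>j\<in>{..<K}. X j -` {t<..} \<inter> space P \<in> {X j -` A \<inter> space P | A. A \<in> sets borel}"
        by (intro ballI CollectI exI[of _ "{t<..}"]) simp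
    qed (use Kne in auto)
    also have "\<dots> = (\<Prod>k\<in>{..<K}. Qs k0 t)"
    proof (intro prod.cong refl)
      fix k assume "k \<in> {..<K}"
      then show "prob (X k -` {t<..} \<inter> space P) = Qs k0 t"
        using Xgt[OF t, of k] by (simp add: vimage_def Int_def conj_commute)
    qed
    finally show ?thesis using ev by simp
  qed

  have AEX: "AE \<omega> in P. 0 \<le> X k \<omega>" if k: "k < K" for k
  proof -
    have [measurable]: "X k \<in> borel_measurable P" using Xmeas k by auto
    have "AE \<omega> in P. - inverse (real (Suc n)) < X k \<omega>" for n
    proof (rule AE_I')
      show "{\<omega> \<in> space P. X k \<omega> \<le> - inverse (real (Suc n))} \<in> null_sets P"
      proof (rule null_setsI)
        have "prob {\<omega> \<in> space P. X k \<omega> \<le> - inverse (real (Suc n))} = 0"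
          using cdf k by simp
        then show "emeasure P {\<omega> \<in> space P. X k \<omega> \<le> - inverse (real (Suc n))} = 0"
          by (simp add: emeasure_eq_measure)
      qed measurable
    qed auto
    then have "AE \<omega> in P. \<forall>n. - inverse (real (Suc n)) < X k \<omega>"
      by (simp add: AE_all_countable)
    then show ?thesis
    proof (rule AE_mp[OF _ AE_I2], intro impI)
      fix \<omega> assume all: "\<forall>n. - inverse (real (Suc n)) < X k \<omega>"
      show "0 \<le> X k \<omega>"
      proof (rule ccontr)
        assume "\<not> 0 \<le> X k \<omega>"
        then obtain n where "inverse (real (Suc n)) < - X k \<omega>"
          using reals_Archimedean[of "- X k \<omega>"] by auto
        then show False using all[rule_format, of n] by simp
      qed
    qed
  qed
  have AEm: "AE \<omega> in P. 0 \<le> m \<omega>"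
  proof -
    have "AE \<omega> in P. \<forall>k\<in>{..<K}. 0 \<le> X k \<omega>"
      by (rule AE_finite_allI) (auto intro: AEX)
    then show ?thesis
      by eventually_elim (use Kne in \<open>auto simp: m_def mset Min_ge_iff\<close>)
  qed

  define h where "h t = indicator {0..} t * (\<rho> * (1 + \<rho> * t) powr (s - 2))" for t :: real
  have h_nn: "0 \<le> h t" for t using r by (auto simp: h_def indicator_def)
  define \<phi> where "\<phi> \<omega> = (1 + \<rho> * m \<omega>) powr (s - 1)" for \<omega>
  define \<psi> where "\<psi> \<omega> = (1 - \<phi> \<omega>) / (1 - s)" for \<omega>
  have \<phi>_meas[measurable]: "\<phi> \<in> borel_measurable P" unfolding \<phi>_def by measurable
  have \<psi>_meas[measurable]: "\<psi> \<in> borel_measurable P" unfolding \<psi>_def by measurable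
  have \<phi>b: "AE \<omega> in P. 0 \<le> \<phi> \<omega> \<and> \<phi> \<omega> \<le> 1"
    using AEm
  proof eventually_elim
    case (elim \<omega>)
    have "1 \<le> 1 + \<rho> * m \<omega>" using elim r by simp
    then have "(1 + \<rho> * m \<omega>) powr (s - 1) \<le> (1 + \<rho> * m \<omega>) powr 0"
      by (intro powr_mono) (use s in auto)
    then show ?case using \<open>1 \<le> 1 + \<rho> * m \<omega>\<close> by (simp add: \<phi>_def)
  qed
  have \<phi>int: "integrable P \<phi>"
  proof (rule integrable_const_bound[where B=1])
    show "AE \<omega> in P. norm (\<phi> \<omega>) \<le> 1" using \<phi>b by eventually_elim auto
  qed measurable
  have \<psi>b: "AE \<omega> in P. 0 \<le> \<psi> \<omega> \<and> \<psi> \<omega> \<le> 1 / (1 - s)"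
    using \<phi>b
  proof eventually_elim
    case (elim \<omega>) then show ?case using s by (auto simp: \<psi>_def divide_right_mono)
  qed
  have \<psi>int: "integrable P \<psi>"
  proof (rule integrable_const_bound[where B="1 / (1 - s)"])
    show "AE \<omega> in P. norm (\<psi> \<omega>) \<le> 1 / (1 - s)" using \<psi>b by eventually_elim auto
  qed measurable
  have \<psi>nn: "AE \<omega> in P. 0 \<le> \<psi> \<omega>" using \<psi>b by (auto elim!: eventually_mono)
  have int\<psi>: "integral\<^sup>L P \<psi> = (1 - integral\<^sup>L P \<phi>) / (1 - s)"
  proof -
    have "integral\<^sup>L P \<psi> = integral\<^sup>L P (\<lambda>\<omega>. 1 - \<phi> \<omega>) / (1 - s)"
      unfolding \<psi>_def by (rule integral_divide_zero)
    also have "integral\<^sup>L P (\<lambda>\<omega>. 1 - \<phi> \<omega>) = integral\<^sup>L P (\<lambda>\<omega>. 1) - integral\<^sup>L P \<phi>"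
      by (rule Bochner_Integration.integral_diff) (use \<phi>int in auto)
    finally show ?thesis by (simp add: prob_space)
  qed

  interpret pf: pair_sigma_finite lborel P
    by (intro pair_sigma_finite.intro sigma_finite_lborel prob_space_imp_sigma_finite assms(1))
  have step1: "(\<integral>\<^sup>+\<omega>. ennreal (\<psi> \<omega>) \<partial>P) = (\<integral>\<^sup>+\<omega>. (\<integral>\<^sup>+t. ennreal (h t) * (if t < m \<omega> then 1 else 0) \<partial>lborel) \<partial>P)"
    using AEm
    by (intro nn_integral_cong_AE) (auto elim!: eventually_mono simp: psi_repr[OF s r] h_def \<psi>_def \<phi>_def)
  have step2: "(\<integral>\<^sup>+\<omega>. (\<integral>\<^sup>+t. ennreal (h t) * (if t < m \<omega> then 1 else 0) \<partial>lborel) \<partial>P)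
      = (\<integral>\<^sup>+t. (\<integral>\<^sup>+\<omega>. ennreal (h t) * (if t < m \<omega> then 1 else 0) \<partial>P) \<partial>lborel)"
    by (rule pf.Fubini') (unfold h_def, measurable)
  have Qs_nn: "0 \<le> Qs k t" if "0 \<le> t" for k t
    unfolding Qs_def using that by (intro mult_nonneg_nonneg sum_nonneg) auto
  have step3: "(\<integral>\<^sup>+\<omega>. ennreal (h t) * (if t < m \<omega> then 1 else 0) \<partial>P) = ennreal (h t * Qs k0 t ^ K)" for t
  proof -
    have "(\<integral>\<^sup>+\<omega>. ennreal (h t) * (if t < m \<omega> then 1 else 0) \<partial>P)
        = (\<integral>\<^sup>+\<omega>. ennreal (h t) * indicator {\<omega> \<in> space P. t < m \<omega>} \<omega> \<partial>P)"
      by (intro nn_integral_cong) (auto simp: indicator_def)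
    also have "\<dots> = ennreal (h t) * emeasure P {\<omega> \<in> space P. t < m \<omega>}"
      by (rule nn_integral_cmult_indicator) measurable
    also have "\<dots> = ennreal (h t * Qs k0 t ^ K)"
    proof (cases "0 \<le> t")
      case True
      then show ?thesis using h_nn[of t] Qs_nn[OF True, of k0]
        by (simp add: emeasure_eq_measure Sgt ennreal_mult)
    next
      case False
      then show ?thesis by (simp add: h_def)
    qed
    finally show ?thesis .
  qed
  have E\<psi>: "(\<integral>\<^sup>+\<omega>. ennreal (\<psi> \<omega>) \<partial>P) = (\<integral>\<^sup>+t. ennreal (h t * Qs k0 t ^ K) \<partial>lborel)"
    unfolding step1 step2 step3 ..

  have S_nn: "0 \<le> (1 - (1 - exp (- (\<beta> * t))) ^ M) ^ K" if "0 \<le> \<beta>" "0 \<le> t" for \<beta> t :: real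
  proof -
    have "0 \<le> 1 - exp (- (\<beta> * t))" "1 - exp (- (\<beta> * t)) \<le> 1" using that by auto
    then have "(1 - exp (- (\<beta> * t))) ^ M \<le> 1" by (rule power_le_one)
    then show ?thesis by simp
  qed
  have nnB: "(\<integral>\<^sup>+t. ennreal (h t * (1 - (1 - exp (- (\<beta> * t))) ^ M) ^ K) \<partial>lborel) = ennreal (Bfun M K \<rho> s \<beta>)
      \<and> 0 \<le> Bfun M K \<rho> s \<beta>" if \<beta>: "0 \<le> \<beta>" for \<beta>
  proof -
    have e: "(\<lambda>t. h t * (1 - (1 - exp (- (\<beta> * t))) ^ M) ^ K)
       = (\<lambda>t. indicator {0..} t * (\<rho> * (1 + \<rho> * t) powr (s - 2) * (1 - (1 - exp (- (\<beta> * t))) ^ M) ^ K))"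
      by (auto simp: h_def mult_ac)
    have nn: "0 \<le> h t * (1 - (1 - exp (- (\<beta> * t))) ^ M) ^ K" for t
      by (cases "0 \<le> t") (use r in \<open>auto simp: h_def intro!: mult_nonneg_nonneg S_nn[OF \<beta>]\<close>)
    have "(\<integral>\<^sup>+t. ennreal (h t * (1 - (1 - exp (- (\<beta> * t))) ^ M) ^ K) \<partial>lborel)
        = ennreal (integral\<^sup>L lborel (\<lambda>t. h t * (1 - (1 - exp (- (\<beta> * t))) ^ M) ^ K))"
      by (rule nn_integral_eq_integral) (use Sb_integral(1)[OF s r \<beta>, of M K] e nn in auto)
    moreover have "integral\<^sup>L lborel (\<lambda>t. h t * (1 - (1 - exp (- (\<beta> * t))) ^ M) ^ K) = Bfun M K \<rho> s \<beta>"
      using Sb_integral(2)[OF s r \<beta>, of M K] e by simp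
    moreover have "0 \<le> integral\<^sup>L lborel (\<lambda>t. h t * (1 - (1 - exp (- (\<beta> * t))) ^ M) ^ K)"
      by (rule integral_nonneg_AE) (use nn in auto)
    ultimately show ?thesis by simp
  qed

  have lowS: "(1 - (1 - exp (- (1 * t))) ^ M) ^ K \<le> Qs k0 t ^ K" if t: "0 \<le> t" for t
  proof (rule power_mono)
    show "1 - (1 - exp (- (1 * t))) ^ M \<le> Qs k0 t" using Aq_upper[OF t, of k0] by (simp add: M)
    have "(1 - exp (- (1 * t))) ^ M \<le> 1" using t by (intro power_le_one) auto
    then show "0 \<le> 1 - (1 - exp (- (1 * t))) ^ M" by simp
  qed
  have upS: "Qs k0 t ^ K \<le> (1 - (1 - exp (- (b * t))) ^ M) ^ K" if t: "0 \<le> t" for t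
  proof (rule power_mono)
    show "Qs k0 t \<le> 1 - (1 - exp (- (b * t))) ^ M" using Aq_lower[OF t b] by (simp add: M)
  qed (rule Qs_nn[OF t])

  have "ennreal (Bfun M K \<rho> s 1) = (\<integral>\<^sup>+t. ennreal (h t * (1 - (1 - exp (- (1 * t))) ^ M) ^ K) \<partial>lborel)"
    using nnB[of 1] by simp
  also have "\<dots> \<le> (\<integral>\<^sup>+t. ennreal (h t * Qs k0 t ^ K) \<partial>lborel)"
  proof (intro nn_integral_mono ennreal_leI)
    fix t :: real
    show "h t * (1 - (1 - exp (- (1 * t))) ^ M) ^ K \<le> h t * Qs k0 t ^ K"
    proof (cases "0 \<le> t")
      case True show ?thesis by (rule mult_left_mono[OF lowS[OF True] h_nn])
    qed (simp add: h_def)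
  qed
  finally have lo: "ennreal (Bfun M K \<rho> s 1) \<le> (\<integral>\<^sup>+\<omega>. ennreal (\<psi> \<omega>) \<partial>P)" unfolding E\<psi> .
  have "(\<integral>\<^sup>+t. ennreal (h t * Qs k0 t ^ K) \<partial>lborel) \<le> (\<integral>\<^sup>+t. ennreal (h t * (1 - (1 - exp (- (b * t))) ^ M) ^ K) \<partial>lborel)"
  proof (intro nn_integral_mono ennreal_leI)
    fix t :: real
    show "h t * Qs k0 t ^ K \<le> h t * (1 - (1 - exp (- (b * t))) ^ M) ^ K"
    proof (cases "0 \<le> t")
      case True show ?thesis by (rule mult_left_mono[OF upS[OF True] h_nn])
    qed (simp add: h_def)
  qed
  also have "\<dots> = ennreal (Bfun M K \<rho> s b)" using nnB[of b] b by simp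
  finally have hi: "(\<integral>\<^sup>+\<omega>. ennreal (\<psi> \<omega>) \<partial>P) \<le> ennreal (Bfun M K \<rho> s b)" unfolding E\<psi> .
  have Bb_nn: "0 \<le> Bfun M K \<rho> s b" using nnB[of b] b by simp
  have E\<psi>': "(\<integral>\<^sup>+\<omega>. ennreal (\<psi> \<omega>) \<partial>P) = ennreal (integral\<^sup>L P \<psi>)"
    by (rule nn_integral_eq_integral[OF \<psi>int \<psi>nn])
  have I\<psi>nn: "0 \<le> integral\<^sup>L P \<psi>" by (rule integral_nonneg_AE[OF \<psi>nn])
  have lo': "Bfun M K \<rho> s 1 \<le> integral\<^sup>L P \<psi>" using lo I\<psi>nn unfolding E\<psi>' by (simp add: ennreal_le_iff)
  have hi': "integral\<^sup>L P \<psi> \<le> Bfun M K \<rho> s b" using hi Bb_nn unfolding E\<psi>' by (simp add: ennreal_le_iff)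
  have I\<phi>: "integral\<^sup>L P \<phi> = 1 - (1 - s) * integral\<^sup>L P \<psi>" using int\<psi> s by simp
  have eq\<phi>: "(\<integral>\<omega>. (1 + \<rho> * Min {X k \<omega> | k. k < K}) powr (s - 1) \<partial>P) = integral\<^sup>L P \<phi>"
    by (simp add: \<phi>_def[abs_def] m_def)
  have "(1 - s) * Bfun M K \<rho> s 1 \<le> (1 - s) * integral\<^sup>L P \<psi>" using lo' s by (intro mult_left_mono) auto
  moreover have "(1 - s) * integral\<^sup>L P \<psi> \<le> (1 - s) * Bfun M K \<rho> s b" using hi' s by (intro mult_left_mono) auto
  ultimately show ?thesis unfolding eq\<phi> I\<phi> b_def[symmetric] by (auto simp: algebra_simps)
qed

end
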